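(* Let $X$ be a $T_0$ topological space with a countable basis. The following are equivalent: (1) player Nonempty has a convergent winning strategy in the Choquet game $\mathit{Ch}(X)$; (2) player Nonempty has a stationary convergent winning strategy in $\mathit{Ch}(X)$; (3) $X$ is quasi-Polish.
   Context: Choquet game $\mathit{Ch}(X)$: players Empty and Nonempty alternate for $\omega$ rounds; in round $i$ Empty chooses $(x_i,U_i)$ with $U_i$ open, $x_i\in U_i$, and $U_i\subseteq V_{i-1}$ for $i\ge1$; Nonempty answers with an open $V_i$ with $x_i\in V_i\subseteq U_i$. Nonempty wins iff $\bigcap_iV_i\ne\emptyset$. A strategy maps partial plays ending with a move of the opponent to a move; it is winning if every play following it is won. A winning strategy for Nonempty is stationary if it depends only on the last move of Empty, and convergent if in every play following it the $V_i$ form a neighborhood basis of some point of $\bigcap_iV_i$. Quasi-Polish: second countable space whose topology is induced by a complete quasi-metric ($d:X^2\to[0,\infty)$ with $x=y\iff d(x,y)=d(y,x)=0$ and triangle inequality; complete: every sequence with $\lim_n\sup_{p\ge n}d(x_n,x_p)=0$ converges for $\max(d(x,y),d(y,x))$). *)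

theory Defs
  imports "HOL-Analysis.Analysis"
begin

text \<open>A move of Empty is a pair (x, U); a move of Nonempty is an open set V.
  A partial play is recorded as the list of completed rounds ((x_j, U_j), V_j);
  a strategy for Nonempty maps such a history together with the current move
  of Empty to the answer of Nonempty.\<close>

type_synonym 'a ch_history = "(('a \<times> 'a set) \<times> 'a set) list"
type_synonym 'a ch_strategy = "'a ch_history \<Rightarrow> ('a \<times> 'a set) \<Rightarrow> 'a set"

definition ch_hist :: "(nat \<Rightarrow> 'a) \<Rightarrow> (nat \<Rightarrow> 'a set) \<Rightarrow> (nat \<Rightarrow> 'a set) \<Rightarrow> nat \<Rightarrow> 'a ch_history" where
  "ch_hist x U V n = map (\<lambda>j. ((x j, U j), V j)) [0..<n]"

definition ch_empty_ok :: "'a topology \<Rightarrow> (nat \<Rightarrow> 'a) \<Rightarrow> (nat \<Rightarrow> 'a set) \<Rightarrow> (nat \<Rightarrow> 'a set) \<Rightarrow> nat \<Rightarrow> bool" where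
  "ch_empty_ok X x U V i \<longleftrightarrow> openin X (U i) \<and> x i \<in> U i \<and> (0 < i \<longrightarrow> U i \<subseteq> V (i - 1))"

text \<open>A partial play following sigma that ends with the move (x n, U n) of Empty.\<close>
definition ch_partial_play :: "'a topology \<Rightarrow> 'a ch_strategy \<Rightarrow> (nat \<Rightarrow> 'a) \<Rightarrow> (nat \<Rightarrow> 'a set) \<Rightarrow> (nat \<Rightarrow> 'a set) \<Rightarrow> nat \<Rightarrow> bool" where
  "ch_partial_play X \<sigma> x U V n \<longleftrightarrow>
     (\<forall>i\<le>n. ch_empty_ok X x U V i) \<and> (\<forall>i<n. V i = \<sigma> (ch_hist x U V i) (x i, U i))"

definition ch_play :: "'a topology \<Rightarrow> 'a ch_strategy \<Rightarrow> (nat \<Rightarrow> 'a) \<Rightarrow> (nat \<Rightarrow> 'a set) \<Rightarrow> (nat \<Rightarrow> 'a set) \<Rightarrow> bool" where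
  "ch_play X \<sigma> x U V \<longleftrightarrow>
     (\<forall>i. ch_empty_ok X x U V i \<and> V i = \<sigma> (ch_hist x U V i) (x i, U i))"

definition ch_winning :: "'a topology \<Rightarrow> 'a ch_strategy \<Rightarrow> bool" where
  "ch_winning X \<sigma> \<longleftrightarrow>
     (\<forall>x U V n. ch_partial_play X \<sigma> x U V n \<longrightarrow>
        openin X (\<sigma> (ch_hist x U V n) (x n, U n)) \<and>
        x n \<in> \<sigma> (ch_hist x U V n) (x n, U n) \<and>
        \<sigma> (ch_hist x U V n) (x n, U n) \<subseteq> U n) \<and>
     (\<forall>x U V. ch_play X \<sigma> x U V \<longrightarrow> (\<Inter>i. V i) \<noteq> {})"

definition ch_stationary :: "'a ch_strategy \<Rightarrow> bool" where
  "ch_stationary \<sigma> \<longleftrightarrow> (\<exists>f. \<forall>h m. \<sigma> h m = f m)"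

definition ch_convergent :: "'a topology \<Rightarrow> 'a ch_strategy \<Rightarrow> bool" where
  "ch_convergent X \<sigma> \<longleftrightarrow>
     (\<forall>x U V. ch_play X \<sigma> x U V \<longrightarrow>
        (\<exists>y \<in> (\<Inter>i. V i). \<forall>W. openin X W \<and> y \<in> W \<longrightarrow> (\<exists>i. V i \<subseteq> W)))"

text \<open>Quasi-metrics on the carrier S, the topology they induce (open balls
  {y. d x y < e}), and completeness
  (lim_n sup_{p>=n} d(s n, s p) = 0, written out with epsilons so that
  unbounded suprema are handled correctly).\<close>
definition quasi_metric_on :: "'a set \<Rightarrow> ('a \<Rightarrow> 'a \<Rightarrow> real) \<Rightarrow> bool" where
  "quasi_metric_on S d \<longleftrightarrow>
     (\<forall>x\<in>S. \<forall>y\<in>S. 0 \<le> d x y) \<and>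
     (\<forall>x\<in>S. \<forall>y\<in>S. x = y \<longleftrightarrow> d x y = 0 \<and> d y x = 0) \<and>
     (\<forall>x\<in>S. \<forall>y\<in>S. \<forall>z\<in>S. d x z \<le> d x y + d y z)"

definition qm_induces :: "'a topology \<Rightarrow> ('a \<Rightarrow> 'a \<Rightarrow> real) \<Rightarrow> bool" where
  "qm_induces X d \<longleftrightarrow>
     (\<forall>W. openin X W \<longleftrightarrow>
        W \<subseteq> topspace X \<and>
        (\<forall>x\<in>W. \<exists>e>0. \<forall>y\<in>topspace X. d x y < e \<longrightarrow> y \<in> W))"

definition qm_complete :: "'a set \<Rightarrow> ('a \<Rightarrow> 'a \<Rightarrow> real) \<Rightarrow> bool" where
  "qm_complete S d \<longleftrightarrow>
     (\<forall>s. range s \<subseteq> S \<longrightarrow>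
        (\<forall>e>0. \<exists>N. \<forall>n\<ge>N. \<forall>p\<ge>n. d (s n) (s p) \<le> e) \<longrightarrow>
        (\<exists>y\<in>S. (\<lambda>n. max (d (s n) y) (d y (s n))) \<longlonglongrightarrow> 0))"

definition quasi_Polish :: "'a topology \<Rightarrow> bool" where
  "quasi_Polish X \<longleftrightarrow> second_countable X \<and>
     (\<exists>d. quasi_metric_on (topspace X) d \<and> qm_induces X d \<and> qm_complete (topspace X) d)"

end

theory Submission
  imports Defs "HOL-Library.Extended_Nat"
begin

definition hh :: "(nat \<Rightarrow> 'a set) \<Rightarrow> 'a \<Rightarrow> enat" where
  "hh W x = (if \<exists>i. x \<in> W i then enat (LEAST i. x \<in> W i) else \<infinity>)"

lemma hh_ex: "\<exists>i. x \<in> W i \<Longrightarrow> hh W x = enat (LEAST i. x \<in> W i)"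
  unfolding hh_def by (rule if_P)

lemma hh_nex: "\<not> (\<exists>i. x \<in> W i) \<Longrightarrow> hh W x = \<infinity>"
  unfolding hh_def by (rule if_not_P)

lemma hh_le_enat: "hh W x \<le> enat k \<longleftrightarrow> (\<exists>i\<le>k. x \<in> W i)"
proof
  assume a: "hh W x \<le> enat k"
  have ex: "\<exists>i. x \<in> W i"
  proof (rule ccontr)
    assume "\<not> (\<exists>i. x \<in> W i)"
    then have "hh W x = \<infinity>" by (rule hh_nex)
    then show False using a by simp
  qed
  have "x \<in> W (LEAST i. x \<in> W i)" using ex by (rule LeastI_ex)
  moreover have "(LEAST i. x \<in> W i) \<le> k" using a hh_ex[OF ex] by simp
  ultimately show "\<exists>i\<le>k. x \<in> W i" by blast
next
  assume "\<exists>i\<le>k. x \<in> W i"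
  then obtain i where i: "i \<le> k" "x \<in> W i" by blast
  then have "(LEAST i. x \<in> W i) \<le> i" by (simp add: Least_le)
  moreover have "hh W x = enat (LEAST i. x \<in> W i)" using i by (intro hh_ex) blast
  ultimately show "hh W x \<le> enat k" using i(1) by simp
qed

lemma hh_eq_enat: "hh W x = enat k \<Longrightarrow> x \<in> W k"
proof -
  assume a: "hh W x = enat k"
  have ex: "\<exists>i. x \<in> W i"
  proof (rule ccontr)
    assume "\<not> (\<exists>i. x \<in> W i)"
    then have "hh W x = \<infinity>" by (rule hh_nex)
    then show False using a by simp
  qed
  have "x \<in> W (LEAST i. x \<in> W i)" using ex by (rule LeastI_ex)
  moreover have "(LEAST i. x \<in> W i) = k" using a hh_ex[OF ex] by simp
  ultimately show ?thesis by simp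
qed

lemma hh_inf: "hh W x = \<infinity> \<longleftrightarrow> (\<forall>i. x \<notin> W i)"
proof
  assume "hh W x = \<infinity>"
  then show "\<forall>i. x \<notin> W i" using hh_ex by (metis infinity_ne_i1 enat.distinct(2))
next
  assume "\<forall>i. x \<notin> W i"
  then show "hh W x = \<infinity>" by (simp add: hh_nex)
qed

lemma hh_mem: "x \<in> W i \<Longrightarrow> hh W x \<le> enat i"
  by (rule hh_le_enat[THEN iffD2]) blast

lemma hh_const: "hh (\<lambda>i. S) x = (if x \<in> S then 0 else \<infinity>)"
proof (cases "x \<in> S")
  case True
  then have "hh (\<lambda>i. S) x \<le> enat 0" by (intro hh_mem)
  then have "hh (\<lambda>i. S) x \<le> 0" by (simp add: zero_enat_def)
  then have "hh (\<lambda>i. S) x = 0" by simp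
  then show ?thesis using True by simp
next
  case False
  then show ?thesis by (simp add: hh_nex)
qed
lemma stable:
  fixes f :: "nat \<Rightarrow> enat"
  assumes "\<forall>k\<ge>N. \<forall>p\<ge>k. f p \<le> f k"
  shows "\<exists>N' c. \<forall>k\<ge>N'. f k = c"
proof -
  define v where "v = (LEAST v. \<exists>p\<ge>N. f p = v)"
  have "\<exists>p\<ge>N. f p = v" unfolding v_def by (rule LeastI_ex) auto
  then obtain p where p: "p \<ge> N" "f p = v" by auto
  have "f k = v" if "k \<ge> p" for k
  proof -
    have "f k \<le> f p" using assms p that by auto
    moreover have "v \<le> f k" unfolding v_def by (rule Least_le, rule exI[of _ k]) (use p that in auto)
    ultimately show ?thesis using p by auto
  qed
  then show ?thesis by blast
qed

lemma EC:
  fixes s :: "nat \<Rightarrow> 'a"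
  assumes "\<forall>k\<ge>N. \<forall>p\<ge>k. hh W (s p) \<le> hh W (s k)"
    and "\<forall>k\<ge>N1. \<exists>i. s k \<in> W i"
  shows "\<exists>i M. \<forall>k\<ge>M. s k \<in> W i"
proof -
  obtain N' c where c: "\<forall>k\<ge>N'. hh W (s k) = c" using stable[of N "\<lambda>p. hh W (s p)", OF assms(1)] by blast
  have "\<exists>i. s (max N' N1) \<in> W i" using assms(2) by simp
  then have "hh W (s (max N' N1)) \<noteq> \<infinity>" unfolding hh_inf by blast
  moreover have "hh W (s (max N' N1)) = c" using c by simp
  ultimately obtain i where ci: "c = enat i" by (cases c) auto
  have "\<forall>k\<ge>N'. s k \<in> W i"
  proof (intro allI impI)
    fix k assume "N' \<le> k"
    then have "hh W (s k) = enat i" using c ci by simp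
    then show "s k \<in> W i" by (rule hh_eq_enat)
  qed
  then show ?thesis by blast
qed

lemma conv_term:
  fixes s :: "nat \<Rightarrow> 'a"
  assumes "\<forall>k\<ge>N. \<forall>p\<ge>k. hh W (s p) \<le> hh W (s k)"
    and star: "\<And>i. (\<exists>M. \<forall>k\<ge>M. s k \<in> W i) \<longleftrightarrow> y \<in> W i"
  shows "\<exists>M. \<forall>k\<ge>M. hh W (s k) = hh W y"
proof -
  obtain N' c where c: "\<forall>k\<ge>N'. hh W (s k) = c" using stable[of N "\<lambda>p. hh W (s p)", OF assms(1)] by blast
  have bound: False if "y \<in> W j" "c > enat j" for j
  proof -
    have "\<exists>M. \<forall>k\<ge>M. s k \<in> W j" using star[of j] that(1) by simp
    then obtain M where M: "\<forall>k\<ge>M. s k \<in> W j" by blast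
    then have "s (max M N') \<in> W j" by simp
    then have "hh W (s (max M N')) \<le> enat j" by (rule hh_mem)
    moreover have "hh W (s (max M N')) = c" using c by simp
    ultimately show False using that(2) by simp
  qed
  have "c = hh W y"
  proof (cases c)
    case (enat i)
    have "\<forall>k\<ge>N'. s k \<in> W i"
    proof (intro allI impI)
      fix k assume "N' \<le> k"
      then have "hh W (s k) = enat i" using c enat by simp
      then show "s k \<in> W i" by (rule hh_eq_enat)
    qed
    then have "\<exists>M. \<forall>k\<ge>M. s k \<in> W i" by blast
    then have yi: "y \<in> W i" using star[of i] by simp
    then have le: "hh W y \<le> enat i" by (rule hh_mem)
    then obtain j where j: "hh W y = enat j" "j \<le> i" by (cases "hh W y") auto
    have "y \<in> W j" using j(1) by (rule hh_eq_enat)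
    then have "\<not> c > enat j" using bound by blast
    then show ?thesis using j enat by simp
  next
    case infinity
    show ?thesis
    proof (cases "hh W y")
      case (enat j)
      then have "y \<in> W j" by (rule hh_eq_enat)
      have "c > enat j" using \<open>c = \<infinity>\<close> by simp
      then show ?thesis using bound \<open>y \<in> W j\<close> by blast
    next
      case infinity
      then show ?thesis using \<open>c = \<infinity>\<close> by simp
    qed
  qed
  then show ?thesis using c by blast
qed

locale fam =
  fixes X :: "'a topology" and W :: "nat \<Rightarrow> nat \<Rightarrow> 'a set" and B :: "nat \<Rightarrow> 'a set"
  assumes W_open: "\<And>m i. openin X (W m i)"
  and B_open: "\<And>n. openin X (B n)"
  and B_base: "\<And>U x. openin X U \<Longrightarrow> x \<in> U \<Longrightarrow> \<exists>n. x \<in> B n \<and> B n \<subseteq> U"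
  and W_base: "\<And>n. \<exists>m. W m = (\<lambda>i. B n)"
  and W_complete: "\<And>s :: nat \<Rightarrow> 'a. (\<forall>k. s k \<in> topspace X) \<Longrightarrow>
        (\<forall>m. \<exists>N. \<forall>k\<ge>N. \<forall>p\<ge>k. hh (W m) (s p) \<le> hh (W m) (s k)) \<Longrightarrow>
        \<exists>y\<in>topspace X. \<forall>m. \<exists>N. \<forall>k\<ge>N. hh (W m) (s k) = hh (W m) y"
begin

definition R where "R m x y \<longleftrightarrow> hh (W m) y \<le> hh (W m) x"
definition G where "G M x = {y \<in> topspace X. \<forall>m<M. R m x y}"

lemma R_refl: "R m x x" by (simp add: R_def)
lemma R_trans: "R m x y \<Longrightarrow> R m y z \<Longrightarrow> R m x z" by (auto simp: R_def)

lemma R_set_open: "openin X {y \<in> topspace X. R m x y}"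
proof (cases "hh (W m) x")
  case (enat k)
  have "{y \<in> topspace X. R m x y} = \<Union> (W m ` {..k})"
    using openin_subset[OF W_open] by (auto simp: R_def enat hh_le_enat)
  then show ?thesis using W_open by auto
next
  case infinity
  then have "{y \<in> topspace X. R m x y} = topspace X" by (auto simp: R_def)
  then show ?thesis by simp
qed

lemma G_open: "openin X (G M x)"
proof (induction M)
  case 0
  then show ?case by (simp add: G_def)
next
  case (Suc M)
  have "G (Suc M) x = G M x \<inter> {y \<in> topspace X. R M x y}"
    by (auto simp: G_def less_Suc_eq)
  then show ?case using Suc R_set_open by auto
qed

lemma G_mono: "M \<le> M' \<Longrightarrow> G M' x \<subseteq> G M x"
  by (auto simp: G_def)

lemma x_in_G: "x \<in> topspace X \<Longrightarrow> x \<in> G M x"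
  by (auto simp: G_def R_refl)

lemma G_sub: assumes "openin X U" "x \<in> U" shows "\<exists>K. G K x \<subseteq> U"
proof -
  obtain n where n: "x \<in> B n" "B n \<subseteq> U" using B_base assms by blast
  obtain m where m: "W m = (\<lambda>i. B n)" using W_base by blast
  have "G (Suc m) x \<subseteq> B n"
  proof
    fix y assume "y \<in> G (Suc m) x"
    then have "R m x y" by (auto simp: G_def)
    then show "y \<in> B n" using n m by (auto simp: R_def hh_const split: if_splits)
  qed
  then show ?thesis using n by blast
qed

definition Kx where "Kx x U = (LEAST K. G K x \<subseteq> U)"
definition Ax where "Ax x U = (LEAST m. \<exists>u\<in>U. \<not> R m x u)"
definition fS :: "'a \<times> 'a set \<Rightarrow> 'a set" where
  "fS = (\<lambda>(x,U). if (\<forall>m. \<forall>u\<in>U. R m x u) then U else G (max (Kx x U) (Suc (Ax x U))) x)"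
definition sigS :: "'a ch_strategy" where "sigS h mv = fS mv"

lemma fS_T: "(\<forall>m. \<forall>u\<in>U. R m x u) \<Longrightarrow> fS (x,U) = U"
  unfolding fS_def prod.case by (rule if_P)

lemma fS_F: "\<not> (\<forall>m. \<forall>u\<in>U. R m x u) \<Longrightarrow> fS (x,U) = G (max (Kx x U) (Suc (Ax x U))) x"
  unfolding fS_def prod.case by (rule if_not_P)

lemma Kx_sub: assumes "openin X U" "x \<in> U" shows "G (Kx x U) x \<subseteq> U"
proof -
  obtain K where "G K x \<subseteq> U" using G_sub[OF assms] by blast
  then show ?thesis unfolding Kx_def by (rule LeastI)
qed

lemma fS_legal:
  assumes "openin X U" "x \<in> U"
  shows "openin X (fS (x,U)) \<and> x \<in> fS (x,U) \<and> fS (x,U) \<subseteq> U"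
proof (cases "\<forall>m. \<forall>u\<in>U. R m x u")
  case True
  then show ?thesis using assms by (simp add: fS_def)
next
  case False
  have xt: "x \<in> topspace X" using assms openin_subset by blast
  have "G (max (Kx x U) (Suc (Ax x U))) x \<subseteq> G (Kx x U) x" by (rule G_mono) simp
  moreover have "fS (x,U) = G (max (Kx x U) (Suc (Ax x U))) x" using False by (rule fS_F)
  ultimately show ?thesis using Kx_sub[OF assms] G_open x_in_G[OF xt] by auto
qed

lemma Ax_ge:
  assumes "\<forall>m<K. \<forall>u\<in>U. R m x u" "\<not> (\<forall>m. \<forall>u\<in>U. R m x u)"
  shows "K \<le> Ax x U"
proof -
  have "\<exists>u\<in>U. \<not> R (Ax x U) x u" unfolding Ax_def
    by (rule LeastI_ex) (use assms(2) in blast)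
  then obtain u where "u \<in> U" "\<not> R (Ax x U) x u" by blast
  then show ?thesis using assms(1) not_le by blast
qed

context
  fixes x :: "nat \<Rightarrow> 'a" and U V :: "nat \<Rightarrow> 'a set"
  assumes play: "ch_play X sigS x U V"
begin

lemma pl0: "ch_empty_ok X x U V i" "V i = fS (x i, U i)"
  using play unfolding ch_play_def sigS_def by blast+

lemma pl: "openin X (U i)" "x i \<in> U i" "U (Suc i) \<subseteq> V i" "V i = fS (x i, U i)"
  using pl0(1)[of i] pl0(1)[of "Suc i"] pl0(2)[of i] unfolding ch_empty_ok_def by auto

lemma Vleg: "openin X (V i)" "x i \<in> V i" "V i \<subseteq> U i"
  using fS_legal[OF pl(1) pl(2)] pl(4) by auto

lemma xtop: "x i \<in> topspace X"
  using pl(2) pl(1) openin_subset by blast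

lemma Vanti: "i \<le> j \<Longrightarrow> V j \<subseteq> V i"
proof (induction j rule: dec_induct)
  case base then show ?case by simp
next
  case (step j)
  then show ?case using Vleg(3)[of "Suc j"] pl(3)[of j] by blast
qed

lemma xin: "i \<le> j \<Longrightarrow> x j \<in> V i"
  using Vanti Vleg(2) by blast

lemma xinG:
  assumes "\<forall>i\<ge>N. V i \<subseteq> G K (x i)" "N \<le> k" "k \<le> p" "m < K"
  shows "hh (W m) (x p) \<le> hh (W m) (x k)"
proof -
  have "x p \<in> V k" using xin assms(3) by blast
  moreover have "V k \<subseteq> G K (x k)" using assms(1,2) by blast
  ultimately have "x p \<in> G K (x k)" by blast
  then have "R m (x k) (x p)" using assms(4) unfolding G_def by blast
  then show ?thesis unfolding R_def .
qed

lemma Q: "\<exists>N. \<forall>i\<ge>N. V i \<subseteq> G K (x i)"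
proof (induction K)
  case 0
  have "V i \<subseteq> G 0 (x i)" for i
    using Vleg(3)[of i] openin_subset[OF pl(1)[of i]] by (simp add: G_def)
  then show ?case by blast
next
  case (Suc K)
  then obtain N where N: "\<forall>i\<ge>N. V i \<subseteq> G K (x i)" by blast
  have "\<forall>m. \<exists>N' c. m < K \<longrightarrow> (\<forall>i\<ge>N'. hh (W m) (x i) = c)"
  proof (intro allI impI)
    fix m
    have "\<forall>k\<ge>N. \<forall>p\<ge>k. hh (W m) (x p) \<le> hh (W m) (x k)" if "m < K"
      using xinG[OF N _ _ that] by blast
    then show "\<exists>N' c. m < K \<longrightarrow> (\<forall>i\<ge>N'. hh (W m) (x i) = c)"
      using stable[of N "\<lambda>p. hh (W m) (x p)"] by blast
  qed
  then obtain Nf cf where Nf: "\<And>m. m < K \<Longrightarrow> \<forall>i\<ge>Nf m. hh (W m) (x i) = cf m" by metis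
  define N1 where "N1 = N + (\<Sum>m<K. Nf m)"
  have "\<forall>i\<ge>Suc N1. V i \<subseteq> G (Suc K) (x i)"
  proof (intro allI impI)
    fix i assume i: "Suc N1 \<le> i"
    then obtain i' where i': "i = Suc i'" "N1 \<le> i'" by (cases i) auto
    have allm: "\<forall>m<K. \<forall>u\<in>U i. R m (x i) u"
    proof (intro allI impI ballI)
      fix m u assume m: "m < K" and u: "u \<in> U i"
      have "N \<le> i'" using i' N1_def by simp
      then have "V i' \<subseteq> G K (x i')" using N by blast
      then have "u \<in> G K (x i')" using u pl(3)[of i'] i'(1) by blast
      then have "R m (x i') u" using m unfolding G_def by blast
      moreover
      have "Nf m \<le> (\<Sum>m<K. Nf m)" using m by (intro member_le_sum) auto
      then have "Nf m \<le> i'" "Nf m \<le> i" using i' N1_def by linarith+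
      then have "hh (W m) (x i) = hh (W m) (x i')" using Nf[OF m] by metis
      ultimately show "R m (x i) u" by (auto simp: R_def)
    qed
    show "V i \<subseteq> G (Suc K) (x i)"
    proof (cases "\<forall>m. \<forall>u\<in>U i. R m (x i) u")
      case True
      then have "V i = U i" using pl(4) fS_T by simp
      moreover have "U i \<subseteq> topspace X" using openin_subset[OF pl(1)[of i]] .
      ultimately show ?thesis using True by (auto simp: G_def)
    next
      case False
      have "K \<le> Ax (x i) (U i)" by (rule Ax_ge[OF allm False])
      then have "Suc K \<le> max (Kx (x i) (U i)) (Suc (Ax (x i) (U i)))" by simp
      then show ?thesis using fS_F[OF False] pl(4) G_mono by simp
    qed
  qed
  then show ?case by blast
qed

lemma cauchy: "\<exists>N. \<forall>k\<ge>N. \<forall>p\<ge>k. hh (W m) (x p) \<le> hh (W m) (x k)"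
proof -
  obtain N where N: "\<forall>i\<ge>N. V i \<subseteq> G (Suc m) (x i)" using Q by blast
  have "hh (W m) (x p) \<le> hh (W m) (x k)" if "k \<ge> N" "p \<ge> k" for k p
    using xinG[OF N that] by simp
  then show ?thesis by blast
qed

lemma limit: "\<exists>y. (\<forall>i. y \<in> V i) \<and> (\<forall>Z. openin X Z \<and> y \<in> Z \<longrightarrow> (\<exists>i. V i \<subseteq> Z))"
proof -
  have c1: "\<forall>m. \<exists>N. \<forall>k\<ge>N. \<forall>p\<ge>k. hh (W m) (x p) \<le> hh (W m) (x k)"
    using cauchy by blast
  have c2: "\<forall>k. x k \<in> topspace X" using xtop by blast
  have "\<exists>y\<in>topspace X. \<forall>m. \<exists>N. \<forall>k\<ge>N. hh (W m) (x k) = hh (W m) y"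
    by (rule W_complete) (fact c2, fact c1)
  then obtain y where y: "y \<in> topspace X" and ev0: "\<forall>m. \<exists>N. \<forall>k\<ge>N. hh (W m) (x k) = hh (W m) y"
    by blast
  have ev: "\<exists>N. \<forall>k\<ge>N. hh (W m) (x k) = hh (W m) y" for m using ev0 by blast
  have Ry: "R m (x i) y" if "\<forall>k\<ge>i. R m (x i) (x k)" for m i
  proof -
    obtain N where N: "\<forall>k\<ge>N. hh (W m) (x k) = hh (W m) y" using ev by blast
    have "R m (x i) (x (max N i))" using that by simp
    then show ?thesis using N by (simp add: R_def)
  qed
  have yV: "y \<in> V i" for i
  proof (cases "\<forall>m. \<forall>u\<in>U i. R m (x i) u")
    case True
    then have VU: "V i = U i" using pl(4) fS_T by simp
    have "\<forall>m. R m (x i) y"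
    proof
      fix m
      have "\<forall>k\<ge>i. R m (x i) (x k)"
      proof (intro allI impI)
        fix k assume "i \<le> k"
        then have "x k \<in> U i" using xin VU by blast
        then show "R m (x i) (x k)" using True by blast
      qed
      then show "R m (x i) y" by (rule Ry)
    qed
    then have "y \<in> G (Kx (x i) (U i)) (x i)" using y by (simp add: G_def)
    then show ?thesis using Kx_sub[OF pl(1) pl(2)] VU by blast
  next
    case False
    then have VG: "V i = G (max (Kx (x i) (U i)) (Suc (Ax (x i) (U i)))) (x i)"
      using pl(4) fS_F[OF False] by simp
    have "\<forall>m < max (Kx (x i) (U i)) (Suc (Ax (x i) (U i))). R m (x i) y"
    proof (intro allI impI)
      fix m assume m: "m < max (Kx (x i) (U i)) (Suc (Ax (x i) (U i)))"
      have "\<forall>k\<ge>i. R m (x i) (x k)"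
      proof (intro allI impI)
        fix k assume "i \<le> k"
        then have "x k \<in> V i" using xin by blast
        then show "R m (x i) (x k)" using VG m by (simp add: G_def)
      qed
      then show "R m (x i) y" by (rule Ry)
    qed
    then show ?thesis using y VG by (simp add: G_def)
  qed
  moreover have "\<exists>i. V i \<subseteq> Z" if zo: "openin X Z" "y \<in> Z" for Z
  proof -
    obtain n where n: "y \<in> B n" "B n \<subseteq> Z" using B_base[OF zo] by blast
    obtain m where m: "W m = (\<lambda>i. B n)" using W_base by blast
    obtain N where N: "\<forall>i\<ge>N. V i \<subseteq> G (Suc m) (x i)" using Q by blast
    obtain N' where N': "\<forall>k\<ge>N'. hh (W m) (x k) = hh (W m) y" using ev by blast
    have "V (max N N') \<subseteq> B n"
    proof
      fix z assume "z \<in> V (max N N')"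
      moreover have "V (max N N') \<subseteq> G (Suc m) (x (max N N'))" using N by simp
      ultimately have "R m (x (max N N')) z" by (auto simp: G_def)
      moreover have "hh (W m) (x (max N N')) = hh (W m) y" using N' by simp
      ultimately have "hh (W m) z \<le> hh (W m) y" by (simp add: R_def)
      moreover have "hh (W m) y = 0" using n(1) m by (simp add: hh_const)
      ultimately have "hh (W m) z \<le> 0" by simp
      then show "z \<in> B n" using m by (simp add: hh_const split: if_splits)
    qed
    then show ?thesis using n by blast
  qed
  ultimately show ?thesis by blast
qed

end

theorem stationary_strategy: "ch_winning X sigS \<and> ch_stationary sigS \<and> ch_convergent X sigS"
proof -
  have w1: "openin X (sigS (ch_hist x U V n) (x n, U n)) \<and>
        x n \<in> sigS (ch_hist x U V n) (x n, U n) \<and>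
        sigS (ch_hist x U V n) (x n, U n) \<subseteq> U n" if "ch_partial_play X sigS x U V n" for x U V n
  proof -
    have "ch_empty_ok X x U V n" using that unfolding ch_partial_play_def by blast
    then have "openin X (U n)" "x n \<in> U n" unfolding ch_empty_ok_def by blast+
    from fS_legal[OF this] show ?thesis unfolding sigS_def .
  qed
  have w2: "(\<Inter>i. V i) \<noteq> {}" if pp: "ch_play X sigS x U V" for x U V
  proof -
    obtain y where "\<forall>i. y \<in> V i"
      using limit[OF pp] by blast
    then show ?thesis by blast
  qed
  have w3: "\<exists>y \<in> (\<Inter>i. V i). \<forall>Z. openin X Z \<and> y \<in> Z \<longrightarrow> (\<exists>i. V i \<subseteq> Z)"
    if pp: "ch_play X sigS x U V" for x U V
  proof -
    obtain y where "\<forall>i. y \<in> V i" "\<forall>Z. openin X Z \<and> y \<in> Z \<longrightarrow> (\<exists>i. V i \<subseteq> Z)"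
      using limit[OF pp] by blast
    then show ?thesis by blast
  qed
  have "ch_convergent X sigS" unfolding ch_convergent_def using w3 by blast
  moreover have "ch_winning X sigS" unfolding ch_winning_def using w1 w2 by blast
  moreover have "ch_stationary sigS" unfolding ch_stationary_def sigS_def by blast
  ultimately show ?thesis by blast
qed

end

context fam begin

definition ind :: "nat \<Rightarrow> 'a \<Rightarrow> 'a \<Rightarrow> real" where
  "ind m x y = (if hh (W m) x < hh (W m) y then 1 else 0)"
definition dd :: "'a \<Rightarrow> 'a \<Rightarrow> real" where
  "dd x y = (\<Sum>m. (1/2::real)^m * ind m x y)"

lemma ind_R: "ind m x y = 0 \<longleftrightarrow> R m x y"
  by (auto simp: ind_def R_def not_less)

lemma ind_cases: "ind m x y = 0 \<or> ind m x y = 1"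
  by (simp add: ind_def)

lemma summ: "summable (\<lambda>m. (1/2::real)^m * ind m x y)"
proof (rule summable_comparison_test'[where N=0])
  show "summable (\<lambda>m. (1/2::real)^m)" by simp
  show "norm ((1/2::real)^n * ind n x y) \<le> (1/2)^n" for n
    using ind_cases[of n x y] by auto
qed

lemma dd_nonneg: "0 \<le> dd x y"
  unfolding dd_def by (rule suminf_nonneg[OF summ]) (simp add: ind_def)

lemma dd_ge: assumes "ind m x y = 1" shows "(1/2)^m \<le> dd x y"
proof -
  have "sum (\<lambda>m. (1/2::real)^m * ind m x y) {m} \<le> dd x y"
    unfolding dd_def by (rule sum_le_suminf[OF summ]) (auto simp: ind_def)
  then show ?thesis using assms by simp
qed

lemma geo_tail: "(\<Sum>n. (1/2::real)^(n+M)) = 2 * (1/2)^M"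
proof -
  have "(\<Sum>n. (1/2::real)^(n+M)) = (\<Sum>n. (1/2)^M * (1/2::real)^n)"
    by (simp add: power_add mult.commute)
  also have "\<dots> = (1/2)^M * (\<Sum>n. (1/2::real)^n)"
    by (rule suminf_mult) simp
  also have "(\<Sum>n. (1/2::real)^n) = 2" using suminf_geometric[of "1/2::real"] by simp
  finally show ?thesis by simp
qed

lemma dd_tail: assumes "\<forall>m<M. R m x y" shows "dd x y \<le> 2 * (1/2)^M"
proof -
  let ?f = "\<lambda>m. (1/2::real)^m * ind m x y"
  have "dd x y = (\<Sum>n. ?f (n + M)) + (\<Sum>i<M. ?f i)"
    unfolding dd_def by (rule suminf_split_initial_segment[OF summ])
  also have "(\<Sum>i<M. ?f i) = 0"
    using assms ind_R by (intro sum.neutral) auto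
  also have "(\<Sum>n. ?f (n + M)) \<le> (\<Sum>n. (1/2::real)^(n+M))"
  proof (rule suminf_le)
    show "?f (n + M) \<le> (1/2)^(n+M)" for n using ind_cases[of "n+M" x y] by auto
    show "summable (\<lambda>n. ?f (n + M))" by (rule summable_ignore_initial_segment[OF summ])
    show "summable (\<lambda>n. (1/2::real)^(n+M))"
      by (rule summable_ignore_initial_segment[where f="\<lambda>n. (1/2::real)^n"]) simp
  qed
  finally show ?thesis using geo_tail by simp
qed

lemma dd_refl: "dd x x = 0"
  unfolding dd_def ind_def by simp

lemma dd_tri: "dd x z \<le> dd x y + dd y z"
proof -
  have "dd x y + dd y z = (\<Sum>m. (1/2::real)^m * ind m x y + (1/2::real)^m * ind m y z)"
    unfolding dd_def by (rule suminf_add[OF summ summ])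
  moreover have "dd x z \<le> (\<Sum>m. (1/2::real)^m * ind m x y + (1/2::real)^m * ind m y z)"
    unfolding dd_def
  proof (rule suminf_le[OF _ summ summable_add[OF summ summ]])
    fix m
    have "ind m x z \<le> ind m x y + ind m y z"
      by (auto simp: ind_def)
    then show "(1/2::real)^m * ind m x z \<le> (1/2)^m * ind m x y + (1/2)^m * ind m y z"
      by (simp add: distrib_left[symmetric])
  qed
  ultimately show ?thesis by simp
qed

lemma dd_zero: assumes "dd x y = 0" shows "R m x y"
proof (rule ccontr)
  assume "\<not> R m x y"
  then have "ind m x y = 1" using ind_R ind_cases by blast
  then have "(1/2)^m \<le> dd x y" by (rule dd_ge)
  moreover have "(0::real) < (1/2)^m" by simp
  ultimately show False using assms by linarith
qed

lemma base_mem: assumes "W m = (\<lambda>i. B n)" "R m x y" "x \<in> B n" shows "y \<in> B n"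
proof -
  have "hh (W m) y \<le> hh (W m) x" using assms(2) by (simp add: R_def)
  then have "hh (W m) y \<le> 0" using assms(1,3) by (simp add: hh_const)
  then show ?thesis using assms(1) by (simp add: hh_const split: if_splits)
qed

lemma dd_sep:
  assumes t0: "t0_space X" and xy: "x \<in> topspace X" "y \<in> topspace X"
    and "dd x y = 0" "dd y x = 0"
  shows "x = y"
proof (rule ccontr)
  assume ne: "x \<noteq> y"
  obtain Z where Z: "openin X Z" "x \<notin> Z \<longleftrightarrow> y \<in> Z"
    using t0 xy ne unfolding t0_space_def by blast
  have same: "x \<in> B n \<longleftrightarrow> y \<in> B n" for n
  proof -
    obtain m where m: "W m = (\<lambda>i. B n)" using W_base by blast
    show ?thesis using base_mem[OF m dd_zero[OF assms(4)]] base_mem[OF m dd_zero[OF assms(5)]] by blast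
  qed
  show False
  proof (cases "y \<in> Z")
    case True
    then obtain n where "y \<in> B n" "B n \<subseteq> Z" using B_base[OF Z(1)] by blast
    then show False using same Z(2) True by blast
  next
    case False
    then have "x \<in> Z" using Z(2) by blast
    then obtain n where "x \<in> B n" "B n \<subseteq> Z" using B_base[OF Z(1)] by blast
    then show False using same Z(2) False by blast
  qed
qed

lemma small_pow: assumes "e > 0" shows "\<exists>M. 2 * (1/2::real)^M < e"
proof -
  obtain M where "(1/2::real)^M < e/2" using real_arch_pow_inv[of "e/2" "1/2"] assms by auto
  then show ?thesis by (intro exI[of _ M]) simp
qed

lemma dd_induces: "qm_induces X dd"
  unfolding qm_induces_def
proof (intro allI iffI conjI ballI)
  fix Z x assume Z: "openin X Z" and x: "x \<in> Z"
  obtain n where n: "x \<in> B n" "B n \<subseteq> Z" using B_base[OF Z x] by blast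
  obtain m where m: "W m = (\<lambda>i. B n)" using W_base by blast
  show "\<exists>e>0. \<forall>y\<in>topspace X. dd x y < e \<longrightarrow> y \<in> Z"
  proof (intro exI[of _ "(1/2::real)^m"] conjI ballI impI)
    show "(0::real) < (1/2)^m" by simp
    fix y assume "y \<in> topspace X" "dd x y < (1/2)^m"
    then have "\<not> ind m x y = 1" using dd_ge by force
    then have "R m x y" using ind_R ind_cases by blast
    then show "y \<in> Z" using base_mem[OF m _ n(1)] n(2) by blast
  qed
next
  fix Z assume "openin X Z" then show "Z \<subseteq> topspace X" by (rule openin_subset)
next
  fix Z assume Z: "Z \<subseteq> topspace X \<and> (\<forall>x\<in>Z. \<exists>e>0. \<forall>y\<in>topspace X. dd x y < e \<longrightarrow> y \<in> Z)"
  show "openin X Z"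
  proof (subst openin_subopen, intro ballI)
    fix x assume x: "x \<in> Z"
    obtain e where e: "e > 0" "\<forall>y\<in>topspace X. dd x y < e \<longrightarrow> y \<in> Z" using Z x by blast
    obtain M where M: "2 * (1/2::real)^M < e" using small_pow[OF e(1)] by blast
    have "G M x \<subseteq> Z"
    proof
      fix y assume y: "y \<in> G M x"
      then have "y \<in> topspace X" "\<forall>m<M. R m x y" by (auto simp: G_def)
      then show "y \<in> Z" using dd_tail[of M x y] M e(2) by force
    qed
    moreover have "x \<in> G M x" using x Z by (intro x_in_G) blast
    ultimately show "\<exists>T. openin X T \<and> x \<in> T \<and> T \<subseteq> Z" using G_open by blast
  qed
qed

lemma finite_N:
  fixes P :: "nat \<Rightarrow> nat \<Rightarrow> bool"
  assumes "\<And>m. \<exists>N. \<forall>k\<ge>N. P m k"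
  shows "\<exists>N. \<forall>m<M. \<forall>k\<ge>N. P m k"
proof -
  obtain Nf where Nf: "\<And>m. \<forall>k\<ge>Nf m. P m k" using assms by metis
  have "\<forall>m<M. \<forall>k\<ge>(\<Sum>m<M. Nf m). P m k"
  proof (intro allI impI)
    fix m k assume m: "m < M" and k: "(\<Sum>m<M. Nf m) \<le> k"
    have "Nf m \<le> (\<Sum>m<M. Nf m)" using m by (intro member_le_sum) auto
    then show "P m k" using Nf[of m] k by simp
  qed
  then show ?thesis by blast
qed

lemma dd_complete: "qm_complete (topspace X) dd"
  unfolding qm_complete_def
proof (intro allI impI)
  fix s :: "nat \<Rightarrow> 'a"
  assume rs: "range s \<subseteq> topspace X"
    and cs: "\<forall>e>0. \<exists>N. \<forall>n\<ge>N. \<forall>p\<ge>n. dd (s n) (s p) \<le> e"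
  have c1: "\<forall>m. \<exists>N. \<forall>k\<ge>N. \<forall>p\<ge>k. hh (W m) (s p) \<le> hh (W m) (s k)"
  proof
    fix m
    have "(0::real) < (1/2)^m / 2" by simp
    then obtain N where N: "\<forall>n\<ge>N. \<forall>p\<ge>n. dd (s n) (s p) \<le> (1/2)^m / 2" using cs by blast
    have "hh (W m) (s p) \<le> hh (W m) (s k)" if "k \<ge> N" "p \<ge> k" for k p
    proof -
      have "dd (s k) (s p) \<le> (1/2)^m / 2" using N that by blast
      moreover have "(0::real) < (1/2)^m" by simp
      ultimately have "dd (s k) (s p) < (1/2)^m" by linarith
      then have "\<not> ind m (s k) (s p) = 1" using dd_ge by force
      then have "R m (s k) (s p)" using ind_R ind_cases by blast
      then show ?thesis by (simp add: R_def)
    qed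
    then show "\<exists>N. \<forall>k\<ge>N. \<forall>p\<ge>k. hh (W m) (s p) \<le> hh (W m) (s k)" by blast
  qed
  have c2: "\<forall>k. s k \<in> topspace X" using rs by blast
  have "\<exists>y\<in>topspace X. \<forall>m. \<exists>N. \<forall>k\<ge>N. hh (W m) (s k) = hh (W m) y"
    by (rule W_complete) (fact c2, fact c1)
  then obtain y where y: "y \<in> topspace X" and ev: "\<forall>m. \<exists>N. \<forall>k\<ge>N. hh (W m) (s k) = hh (W m) y"
    by blast
  have "(\<lambda>n. max (dd (s n) y) (dd y (s n))) \<longlonglongrightarrow> 0"
  proof (rule LIMSEQ_I)
    fix r :: real assume r: "0 < r"
    obtain M where M: "2 * (1/2::real)^M < r" using small_pow[OF r] by blast
    have ev': "\<exists>N. \<forall>k\<ge>N. hh (W m) (s k) = hh (W m) y" for m using ev by blast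
    obtain N where N: "\<forall>m<M. \<forall>k\<ge>N. hh (W m) (s k) = hh (W m) y"
      using finite_N[of "\<lambda>m k. hh (W m) (s k) = hh (W m) y" M, OF ev'] by blast
    have "norm (max (dd (s k) y) (dd y (s k)) - 0) < r" if "k \<ge> N" for k
    proof -
      have "\<forall>m<M. R m (s k) y" "\<forall>m<M. R m y (s k)" using N that by (auto simp: R_def)
      then have "dd (s k) y \<le> 2 * (1/2)^M" "dd y (s k) \<le> 2 * (1/2)^M" using dd_tail by blast+
      then show ?thesis using M dd_nonneg[of "s k" y] by simp
    qed
    then show "\<exists>no. \<forall>n\<ge>no. norm (max (dd (s n) y) (dd y (s n)) - 0) < r" by blast
  qed
  then show "\<exists>y\<in>topspace X. (\<lambda>n. max (dd (s n) y) (dd y (s n))) \<longlonglongrightarrow> 0" using y by blast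
qed

theorem qP: assumes "t0_space X" "second_countable X" shows "quasi_Polish X"
proof -
  have "quasi_metric_on (topspace X) dd"
    unfolding quasi_metric_on_def using dd_nonneg dd_tri dd_refl dd_sep[OF assms(1)] by metis
  then show ?thesis unfolding quasi_Polish_def using assms(2) dd_induces dd_complete by blast
qed

end

lemma ch_hist_0[simp]: "ch_hist x U V 0 = []"
  by (simp add: ch_hist_def)

lemma ch_hist_Suc: "ch_hist x U V (Suc i) = ch_hist x U V i @ [((x i, U i), V i)]"
  by (simp add: ch_hist_def)

lemma ch_hist_cong:
  "(\<And>j. j < i \<Longrightarrow> x j = x' j \<and> U j = U' j \<and> V j = V' j) \<Longrightarrow> ch_hist x U V i = ch_hist x' U' V' i"
  unfolding ch_hist_def by (rule map_cong) auto

lemma play_partial: "ch_play X \<sigma> x U V \<Longrightarrow> ch_partial_play X \<sigma> x U V n"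
  unfolding ch_play_def ch_partial_play_def by blast

locale tree =
  fixes X :: "'a topology" and \<sigma> :: "'a ch_strategy" and B :: "nat \<Rightarrow> 'a set"
  assumes win: "ch_winning X \<sigma>"
  and conv: "ch_convergent X \<sigma>"
  and B_open: "\<And>n. openin X (B n)"
  and B_base: "\<And>U x. openin X U \<Longrightarrow> x \<in> U \<Longrightarrow> \<exists>n. x \<in> B n \<and> B n \<subseteq> U"
begin

definition pt where "pt h a b = (SOME z. z \<in> B a \<and> B b \<subseteq> \<sigma> h (z, B a))"
definition entry where
  "entry h c = ((pt h (fst c) (snd c), B (fst c)), \<sigma> h (pt h (fst c) (snd c), B (fst c)))"
definition hist_of where "hist_of p = foldl (\<lambda>h c. h @ [entry h c]) [] p"
definition Dset where "Dset p = (if p = [] then topspace X else B (snd (last p)))"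
definition ok where
  "ok p c \<longleftrightarrow> B (fst c) \<subseteq> Dset p \<and> (\<exists>z\<in>B (fst c). B (snd c) \<subseteq> \<sigma> (hist_of p) (z, B (fst c)))"
definition valid where "valid p \<longleftrightarrow> (\<forall>i<length p. ok (take i p) (p!i))"

lemma valid_Nil[simp]: "valid []" by (simp add: valid_def)

lemma valid_snoc: "valid (p @ [c]) \<longleftrightarrow> valid p \<and> ok p c"
proof -
  have tk: "take i (p @ [c]) = take i p" "(p @ [c]) ! i = p ! i" if "i < length p" for i
    using that by (simp_all add: nth_append)
  have tl: "take (length p) (p @ [c]) = p" "(p @ [c]) ! (length p) = c" by simp_all
  show ?thesis
  proof
    assume v: "valid (p @ [c])"
    have "ok p c" using v tl unfolding valid_def by (metis length_append_singleton lessI)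
    moreover have "valid p" unfolding valid_def
    proof (intro allI impI)
      fix i assume i: "i < length p"
      then have "ok (take i (p @ [c])) ((p @ [c]) ! i)" using v unfolding valid_def by simp
      then show "ok (take i p) (p ! i)" using tk[OF i] by simp
    qed
    ultimately show "valid p \<and> ok p c" by blast
  next
    assume a: "valid p \<and> ok p c"
    show "valid (p @ [c])" unfolding valid_def
    proof (intro allI impI)
      fix i assume i: "i < length (p @ [c])"
      show "ok (take i (p @ [c])) ((p @ [c]) ! i)"
      proof (cases "i < length p")
        case True
        then show ?thesis using a tk[OF True] unfolding valid_def by simp
      next
        case False
        then have "i = length p" using i by simp
        then show ?thesis using a tl by simp
      qed
    qed
  qed
qed

lemma hist_Nil[simp]: "hist_of [] = []" by (simp add: hist_of_def)
lemma hist_snoc: "hist_of (p @ [c]) = hist_of p @ [entry (hist_of p) c]"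
  by (simp add: hist_of_def)
lemma Dset_Nil[simp]: "Dset [] = topspace X" by (simp add: Dset_def)
lemma Dset_snoc[simp]: "Dset (p @ [c]) = B (snd c)" by (simp add: Dset_def)

lemma Dset_open: "openin X (Dset p)"
  by (simp add: Dset_def B_open)

lemma pt_prop:
  assumes "ok p c"
  shows "pt (hist_of p) (fst c) (snd c) \<in> B (fst c) \<and> B (snd c) \<subseteq> \<sigma> (hist_of p) (pt (hist_of p) (fst c) (snd c), B (fst c))"
proof -
  have "\<exists>z. z \<in> B (fst c) \<and> B (snd c) \<subseteq> \<sigma> (hist_of p) (z, B (fst c))" using assms unfolding ok_def by blast
  then show ?thesis unfolding pt_def by (rule someI_ex)
qed

lemma PP:
  assumes "valid p" "openin X W" "z \<in> W" "W \<subseteq> Dset p"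
  shows "\<exists>x U V. ch_partial_play X \<sigma> x U V (length p) \<and> ch_hist x U V (length p) = hist_of p
           \<and> x (length p) = z \<and> U (length p) = W"
  using assms
proof (induction p arbitrary: z W rule: rev_induct)
  case Nil
  have "ch_partial_play X \<sigma> (\<lambda>_. z) (\<lambda>_. W) (\<lambda>_. {}) 0"
    using Nil unfolding ch_partial_play_def ch_empty_ok_def by simp
  then show ?case by force
next
  case (snoc c p)
  have vp: "valid p" and okc: "ok p c" using snoc.prems(1) valid_snoc by blast+
  define h where "h = hist_of p"
  define a where "a = fst c"
  define b where "b = snd c"
  define z0 where "z0 = pt h a b"
  have ptp: "z0 \<in> B a" "B b \<subseteq> \<sigma> h (z0, B a)"
    using pt_prop[OF okc] unfolding z0_def h_def a_def b_def by blast+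
  have "B a \<subseteq> Dset p" using okc unfolding ok_def a_def by blast
  then obtain x U V where IH: "ch_partial_play X \<sigma> x U V (length p)" "ch_hist x U V (length p) = h"
      "x (length p) = z0" "U (length p) = B a"
    using snoc.IH[OF vp B_open ptp(1)] h_def by blast
  define n where "n = length p"
  define V' where "V' = V(n := \<sigma> h (z0, B a))"
  define x' where "x' = x(Suc n := z)"
  define U' where "U' = U(Suc n := W)"
  have hist_eq: "ch_hist x' U' V' i = ch_hist x U V i" if "i \<le> n" for i
    by (rule ch_hist_cong) (use that in \<open>auto simp: x'_def U'_def V'_def\<close>)
  have emp: "\<forall>i\<le>n. ch_empty_ok X x U V i" and eqs: "\<forall>i<n. V i = \<sigma> (ch_hist x U V i) (x i, U i)"
    using IH(1) unfolding ch_partial_play_def n_def by blast+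
  have e1: "ch_empty_ok X x' U' V' i" if "i \<le> Suc n" for i
  proof (cases "i = Suc n")
    case True
    have "W \<subseteq> V' n" using snoc.prems(4) ptp(2) unfolding V'_def b_def by simp
    then show ?thesis using True snoc.prems(2,3) unfolding ch_empty_ok_def x'_def U'_def by simp
  next
    case False
    then have "i \<le> n" using that by simp
    then have "ch_empty_ok X x U V i" using emp by blast
    moreover have "0 < i \<Longrightarrow> V' (i - 1) = V (i - 1)"
    proof -
      assume "0 < i"
      then have "i - 1 \<noteq> n" using \<open>i \<le> n\<close> by simp
      then show ?thesis unfolding V'_def by simp
    qed
    ultimately show ?thesis using \<open>i \<le> n\<close> unfolding ch_empty_ok_def x'_def U'_def by auto
  qed
  have e2: "V' i = \<sigma> (ch_hist x' U' V' i) (x' i, U' i)" if "i < Suc n" for i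
  proof (cases "i = n")
    case True
    then show ?thesis using hist_eq[of n] IH(2,3,4) unfolding V'_def x'_def U'_def n_def by simp
  next
    case False
    then have "i < n" using that by simp
    then show ?thesis using eqs hist_eq[of i] unfolding V'_def x'_def U'_def by simp
  qed
  have "ch_partial_play X \<sigma> x' U' V' (Suc n)"
    unfolding ch_partial_play_def using e1 e2 by blast
  moreover have "ch_hist x' U' V' (Suc n) = hist_of (p @ [c])"
  proof -
    have "ch_hist x' U' V' (Suc n) = ch_hist x' U' V' n @ [((x' n, U' n), V' n)]" by (rule ch_hist_Suc)
    also have "\<dots> = h @ [((z0, B a), \<sigma> h (z0, B a))]"
      using hist_eq[of n] IH(2,3,4) unfolding x'_def U'_def V'_def n_def by simp
    also have "\<dots> = hist_of (p @ [c])"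
      unfolding hist_snoc entry_def h_def z0_def a_def b_def by simp
    finally show ?thesis .
  qed
  moreover have "x' (Suc n) = z" "U' (Suc n) = W" unfolding x'_def U'_def by simp_all
  ultimately show ?case unfolding n_def by auto
qed

lemma NM:
  assumes "valid p" "openin X W" "z \<in> W" "W \<subseteq> Dset p"
  shows "openin X (\<sigma> (hist_of p) (z, W)) \<and> z \<in> \<sigma> (hist_of p) (z, W) \<and> \<sigma> (hist_of p) (z, W) \<subseteq> W"
proof -
  obtain x U V where pp: "ch_partial_play X \<sigma> x U V (length p)" "ch_hist x U V (length p) = hist_of p"
      "x (length p) = z" "U (length p) = W"
    using PP[OF assms] by blast
  have "\<forall>x U V n. ch_partial_play X \<sigma> x U V n \<longrightarrow>
        openin X (\<sigma> (ch_hist x U V n) (x n, U n)) \<and>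
        x n \<in> \<sigma> (ch_hist x U V n) (x n, U n) \<and>
        \<sigma> (ch_hist x U V n) (x n, U n) \<subseteq> U n" using win unfolding ch_winning_def by blast
  then have "openin X (\<sigma> (ch_hist x U V (length p)) (x (length p), U (length p))) \<and>
        x (length p) \<in> \<sigma> (ch_hist x U V (length p)) (x (length p), U (length p)) \<and>
        \<sigma> (ch_hist x U V (length p)) (x (length p), U (length p)) \<subseteq> U (length p)"
    using pp(1) by blast
  then show ?thesis using pp(2,3,4) by simp
qed

lemma COV:
  assumes "valid p" "z \<in> Dset p" "openin X Z" "z \<in> Z"
  shows "\<exists>a b. ok p (a,b) \<and> z \<in> B b \<and> B b \<subseteq> Z"
proof -
  obtain a where a: "z \<in> B a" "B a \<subseteq> Dset p" using B_base[OF Dset_open assms(2)] by blast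
  have nm: "openin X (\<sigma> (hist_of p) (z, B a)) \<and> z \<in> \<sigma> (hist_of p) (z, B a) \<and> \<sigma> (hist_of p) (z, B a) \<subseteq> B a"
    using NM[OF assms(1) B_open a(1) a(2)] .
  then have "openin X (\<sigma> (hist_of p) (z, B a) \<inter> Z)" using assms(3) by blast
  moreover have "z \<in> \<sigma> (hist_of p) (z, B a) \<inter> Z" using nm assms(4) by blast
  ultimately obtain b where b: "z \<in> B b" "B b \<subseteq> \<sigma> (hist_of p) (z, B a) \<inter> Z"
    using B_base by meson
  have "ok p (a,b)" unfolding ok_def using a b by auto
  then show ?thesis using b by blast
qed

end

context tree begin

definition WA where
  "WA p i = (if valid p \<and> ok p (prod_decode i) \<and> B (snd (prod_decode i)) \<subseteq> B (length p)
              then B (snd (prod_decode i)) else {})"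
definition WO where
  "WO p i = (if valid p \<and> ok p (prod_decode i) then B (snd (prod_decode i)) else {})"
definition Fam :: "nat + bool \<times> (nat \<times> nat) list \<Rightarrow> nat \<Rightarrow> 'a set" where
  "Fam j = (case j of Inl n \<Rightarrow> (\<lambda>i. B n) | Inr tp \<Rightarrow> (if fst tp then WA (snd tp) else WO (snd tp)))"

lemma WA_mem: "z \<in> WA p i \<Longrightarrow> valid p \<and> ok p (prod_decode i) \<and> B (snd (prod_decode i)) \<subseteq> B (length p) \<and> z \<in> B (snd (prod_decode i))"
  unfolding WA_def by (simp split: if_splits)
lemma WO_mem: "z \<in> WO p i \<Longrightarrow> valid p \<and> ok p (prod_decode i) \<and> z \<in> B (snd (prod_decode i))"
  unfolding WO_def by (simp split: if_splits)
lemma WA_intro: "valid p \<Longrightarrow> ok p (a,b) \<Longrightarrow> B b \<subseteq> B (length p) \<Longrightarrow> z \<in> B b \<Longrightarrow> z \<in> WA p (prod_encode (a,b))"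
  unfolding WA_def by simp
lemma WO_intro: "valid p \<Longrightarrow> ok p (a,b) \<Longrightarrow> z \<in> B b \<Longrightarrow> z \<in> WO p (prod_encode (a,b))"
  unfolding WO_def by simp

lemma Fam_cases: "Fam j i = {} \<or> (\<exists>n. Fam j i = B n)"
  unfolding Fam_def WA_def WO_def by (auto split: sum.splits)

lemma Fam_open: "openin X (Fam j i)"
  using Fam_cases[of j i] B_open by auto

lemma Fam_A: "Fam (Inr (True, p)) = WA p" by (simp add: Fam_def)
lemma Fam_O: "Fam (Inr (False, p)) = WO p" by (simp add: Fam_def)
lemma Fam_B: "Fam (Inl n) = (\<lambda>i. B n)" by (simp add: Fam_def)

theorem TC:
  fixes s :: "nat \<Rightarrow> 'a"
  assumes st: "\<forall>k. s k \<in> topspace X"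
    and cs: "\<forall>j. \<exists>N. \<forall>k\<ge>N. \<forall>q\<ge>k. hh (Fam j) (s q) \<le> hh (Fam j) (s k)"
  shows "\<exists>y\<in>topspace X. \<forall>j. \<exists>N. \<forall>k\<ge>N. hh (Fam j) (s k) = hh (Fam j) y"
proof -
  define evin where "evin S \<longleftrightarrow> (\<exists>N. \<forall>k\<ge>N. s k \<in> S)" for S
  have evin_mono: "evin T" if "evin S" "S \<subseteq> T" for S T using that unfolding evin_def by blast
  have evin_int: "evin (S \<inter> T)" if h1: "evin S" and h2: "evin T" for S T
  proof -
    obtain N1 where "\<forall>k\<ge>N1. s k \<in> S" using h1 unfolding evin_def by blast
    moreover obtain N2 where "\<forall>k\<ge>N2. s k \<in> T" using h2 unfolding evin_def by blast
    ultimately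
    have "\<forall>k\<ge>max N1 N2. s k \<in> S \<inter> T" by simp
    then show ?thesis unfolding evin_def by blast
  qed
  have evin_ne: "S \<noteq> {}" if h: "evin S" for S
  proof -
    obtain N where "\<forall>k\<ge>N. s k \<in> S" using h unfolding evin_def by blast
    then show ?thesis by auto
  qed
  have csj: "\<exists>N. \<forall>k\<ge>N. \<forall>q\<ge>k. hh (Fam j) (s q) \<le> hh (Fam j) (s k)" for j using cs by blast
  have ECj: "\<exists>i. evin (Fam j i)" if h: "evin (\<Union>i. Fam j i)" for j
  proof -
    obtain N where N: "\<forall>k\<ge>N. \<forall>q\<ge>k. hh (Fam j) (s q) \<le> hh (Fam j) (s k)" using csj by blast
    obtain N1 where N1: "\<forall>k\<ge>N1. s k \<in> (\<Union>i. Fam j i)" using h unfolding evin_def by blast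
    have "\<forall>k\<ge>N1. \<exists>i. s k \<in> Fam j i" using N1 by blast
    then obtain i M where "\<forall>k\<ge>M. s k \<in> Fam j i" using EC[OF N] by blast
    then show ?thesis unfolding evin_def by blast
  qed
  define nxt where "nxt p = (if \<exists>i. evin (WA p i) then prod_decode (SOME i. evin (WA p i))
                              else prod_decode (SOME i. evin (WO p i)))" for p
  define Nd where "Nd = rec_nat [] (\<lambda>k p. p @ [nxt p])"
  have Nd0: "Nd 0 = []" and NdS: "Nd (Suc k) = Nd k @ [nxt (Nd k)]" for k
    unfolding Nd_def by simp_all
  have lenNd: "length (Nd k) = k" for k by (induction k) (simp_all add: Nd0 NdS)
  have step: "valid (p @ [nxt p]) \<and> evin (Dset (p @ [nxt p]))" if vp: "valid p" and ep: "evin (Dset p)" for p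
  proof -
    have gen: "valid (p @ [nxt p]) \<and> evin (Dset (p @ [nxt p]))"
      if i: "evin (F i)" and nx: "nxt p = prod_decode i"
        and Fh: "\<And>z. z \<in> F i \<Longrightarrow> ok p (prod_decode i) \<and> z \<in> B (snd (prod_decode i))" for F i
    proof -
      obtain z where "z \<in> F i" using evin_ne[OF i] by blast
      then have okc: "ok p (nxt p)" using Fh nx by simp
      have "F i \<subseteq> B (snd (nxt p))" using Fh nx by auto
      then have "evin (Dset (p @ [nxt p]))" using evin_mono[OF i] by simp
      then show ?thesis using okc vp valid_snoc by blast
    qed
    show ?thesis
    proof (cases "\<exists>i. evin (WA p i)")
      case True
      let ?i = "SOME i. evin (WA p i)"
      have "evin (WA p ?i)" using True by (rule someI_ex)
      moreover have "nxt p = prod_decode ?i" using True unfolding nxt_def by simp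
      ultimately show ?thesis using gen[of "WA p" ?i] WA_mem by blast
    next
      case False
      have "evin (\<Union>i. Fam (Inr (False, p)) i)"
      proof -
        have "Dset p \<subseteq> (\<Union>i. WO p i)"
        proof
          fix z assume z: "z \<in> Dset p"
          moreover have "z \<in> topspace X" using z openin_subset[OF Dset_open[of p]] by blast
          ultimately obtain a b where "ok p (a,b)" "z \<in> B b"
            using COV[OF vp _ openin_topspace] by blast
          then show "z \<in> (\<Union>i. WO p i)" using WO_intro[OF vp] by blast
        qed
        then show ?thesis using evin_mono[OF ep] Fam_O by simp
      qed
      then have ex: "\<exists>i. evin (WO p i)" using ECj Fam_O by metis
      let ?i = "SOME i. evin (WO p i)"
      have "evin (WO p ?i)" using ex by (rule someI_ex)
      moreover have "nxt p = prod_decode ?i" using False unfolding nxt_def by simp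
      ultimately show ?thesis using gen[of "WO p" ?i] WO_mem by blast
    qed
  qed
  have inv: "valid (Nd k) \<and> evin (Dset (Nd k))" for k
  proof (induction k)
    case 0
    have "evin (topspace X)" unfolding evin_def using st by blast
    then show ?case by (simp add: Nd0)
  next
    case (Suc k)
    then show ?case using step NdS by simp
  qed
  have keyA: "B (snd (nxt (Nd k))) \<subseteq> B k" if eb: "evin (B k)" for k
  proof -
    let ?p = "Nd k"
    have vp: "valid ?p" and ep: "evin (Dset ?p)" using inv by blast+
    have "Dset ?p \<inter> B k \<subseteq> (\<Union>i. WA ?p i)"
    proof
      fix z assume z: "z \<in> Dset ?p \<inter> B k"
      then obtain a b where ab: "ok ?p (a,b)" "z \<in> B b" "B b \<subseteq> B k"
        using COV[OF vp _ B_open] by blast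
      then show "z \<in> (\<Union>i. WA ?p i)" using WA_intro[OF vp ab(1) _ ab(2)] lenNd by auto
    qed
    then have "evin (\<Union>i. Fam (Inr (True, ?p)) i)" using evin_mono[OF evin_int[OF ep eb]] Fam_A by simp
    then have ex: "\<exists>i. evin (WA ?p i)" using ECj Fam_A by metis
    let ?i = "SOME i. evin (WA ?p i)"
    have "evin (WA ?p ?i)" using ex by (rule someI_ex)
    then obtain z where "z \<in> WA ?p ?i" using evin_ne by blast
    then have "B (snd (prod_decode ?i)) \<subseteq> B (length ?p)" using WA_mem by blast
    moreover have "nxt ?p = prod_decode ?i" using ex unfolding nxt_def by simp
    ultimately show ?thesis using lenNd by simp
  qed
  define P where "P k = nxt (Nd k)" for k
  define H where "H i = hist_of (Nd i)" for i
  define x where "x i = pt (H i) (fst (P i)) (snd (P i))" for i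
  define U where "U i = B (fst (P i))" for i
  define V where "V i = \<sigma> (H i) (x i, U i)" for i
  have okP: "ok (Nd i) (P i)" for i using inv[of "Suc i"] NdS valid_snoc unfolding P_def by simp
  have HS: "H (Suc i) = H i @ [((x i, U i), V i)]" for i
    unfolding H_def NdS hist_snoc entry_def x_def U_def V_def P_def H_def by simp
  have chh: "ch_hist x U V i = H i" for i
  proof (induction i)
    case 0 then show ?case by (simp add: H_def Nd0)
  next
    case (Suc i) then show ?case using HS[of i] ch_hist_Suc[of x U V i] by simp
  qed
  have ptP: "x i \<in> U i" "B (snd (P i)) \<subseteq> V i" for i
  proof -
    have "pt (hist_of (Nd i)) (fst (P i)) (snd (P i)) \<in> B (fst (P i)) \<and>
      B (snd (P i)) \<subseteq> \<sigma> (hist_of (Nd i)) (pt (hist_of (Nd i)) (fst (P i)) (snd (P i)), B (fst (P i)))"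
      by (rule pt_prop[OF okP[of i]])
    then show "x i \<in> U i" "B (snd (P i)) \<subseteq> V i" unfolding x_def U_def V_def H_def by simp_all
  qed
  have DsetS: "Dset (Nd (Suc i)) = B (snd (P i))" for i unfolding NdS P_def by simp
  have UsubD: "U (Suc i) \<subseteq> Dset (Nd (Suc i))" for i
    using okP[of "Suc i"] unfolding ok_def U_def by blast
  have play: "ch_play X \<sigma> x U V"
    unfolding ch_play_def
  proof
    fix i
    have "ch_empty_ok X x U V i"
      unfolding ch_empty_ok_def
    proof (intro conjI impI)
      show "openin X (U i)" unfolding U_def by (rule B_open)
      show "x i \<in> U i" by (rule ptP)
      assume "0 < i"
      then obtain i' where i': "i = Suc i'" by (cases i) auto
      show "U i \<subseteq> V (i - 1)" using UsubD[of i'] DsetS[of i'] ptP(2)[of i'] i' by simp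
    qed
    moreover have "V i = \<sigma> (ch_hist x U V i) (x i, U i)" unfolding chh V_def ..
    ultimately show "ch_empty_ok X x U V i \<and> V i = \<sigma> (ch_hist x U V i) (x i, U i)" by blast
  qed
  obtain y where yV: "y \<in> (\<Inter>i. V i)" and ybase: "\<forall>W. openin X W \<and> y \<in> W \<longrightarrow> (\<exists>i. V i \<subseteq> W)"
    using conv play unfolding ch_convergent_def by blast
  have VU: "V i \<subseteq> U i" for i
  proof -
    have "\<forall>x U V n. ch_partial_play X \<sigma> x U V n \<longrightarrow>
        \<sigma> (ch_hist x U V n) (x n, U n) \<subseteq> U n" using win unfolding ch_winning_def by blast
    then have "ch_partial_play X \<sigma> x U V i \<longrightarrow> \<sigma> (ch_hist x U V i) (x i, U i) \<subseteq> U i" by blast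
    then have "\<sigma> (ch_hist x U V i) (x i, U i) \<subseteq> U i" using play_partial[OF play, of i] by blast
    moreover have "V i = \<sigma> (ch_hist x U V i) (x i, U i)" unfolding chh V_def ..
    ultimately show ?thesis by simp
  qed
  have "y \<in> V 0" using yV by blast
  moreover have "U 0 \<subseteq> topspace X" unfolding U_def by (rule openin_subset[OF B_open])
  ultimately have ytop: "y \<in> topspace X" using VU[of 0] by blast
  have star: "evin (B n) \<longleftrightarrow> y \<in> B n" for n
  proof
    assume "evin (B n)"
    then have "B (snd (P n)) \<subseteq> B n" using keyA unfolding P_def by blast
    moreover have "y \<in> V (Suc n)" using yV by blast
    ultimately show "y \<in> B n" using VU[of "Suc n"] UsubD[of n] DsetS[of n] by blast
  next
    assume "y \<in> B n"
    then obtain i where "V i \<subseteq> B n" using ybase B_open by blast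
    moreover have "evin (Dset (Nd (Suc i)))" using inv by blast
    ultimately show "evin (B n)" using DsetS[of i] ptP(2)[of i] evin_mono by blast
  qed
  have starF: "(\<exists>M. \<forall>k\<ge>M. s k \<in> Fam j i) \<longleftrightarrow> y \<in> Fam j i" for j i
  proof (cases "Fam j i = {}")
    case True then show ?thesis by auto
  next
    case False
    then obtain n where "Fam j i = B n" using Fam_cases by blast
    then show ?thesis using star[of n] unfolding evin_def by simp
  qed
  have "\<exists>N. \<forall>k\<ge>N. hh (Fam j) (s k) = hh (Fam j) y" for j
  proof -
    obtain N where N: "\<forall>k\<ge>N. \<forall>q\<ge>k. hh (Fam j) (s q) \<le> hh (Fam j) (s k)" using csj by blast
    show ?thesis by (rule conv_term[OF N starF])
  qed
  then show ?thesis using ytop by blast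
qed

end

locale qmsp =
  fixes X :: "'a topology" and d :: "'a \<Rightarrow> 'a \<Rightarrow> real"
  assumes qm: "quasi_metric_on (topspace X) d"
  and ind: "qm_induces X d"
  and cpl: "qm_complete (topspace X) d"
begin

lemma d_nonneg: "x \<in> topspace X \<Longrightarrow> y \<in> topspace X \<Longrightarrow> 0 \<le> d x y"
  using qm unfolding quasi_metric_on_def by blast
lemma d_self: "x \<in> topspace X \<Longrightarrow> d x x = 0"
  using qm unfolding quasi_metric_on_def by blast
lemma d_tri: "x \<in> topspace X \<Longrightarrow> y \<in> topspace X \<Longrightarrow> z \<in> topspace X \<Longrightarrow> d x z \<le> d x y + d y z"
  using qm unfolding quasi_metric_on_def by blast

definition ball where "ball x r = {y \<in> topspace X. d x y < r}"

lemma open_char: "openin X Z \<longleftrightarrow> Z \<subseteq> topspace X \<and> (\<forall>x\<in>Z. \<exists>e>0. \<forall>y\<in>topspace X. d x y < e \<longrightarrow> y \<in> Z)"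
  using ind unfolding qm_induces_def by blast

lemma ball_open: assumes "x \<in> topspace X" shows "openin X (ball x r)"
proof -
  have "\<exists>e>0. \<forall>w\<in>topspace X. d z w < e \<longrightarrow> w \<in> ball x r" if z: "z \<in> ball x r" for z
  proof (intro exI[of _ "r - d x z"] conjI ballI impI)
    show "0 < r - d x z" using z by (simp add: ball_def)
    fix w assume w: "w \<in> topspace X" "d z w < r - d x z"
    have "z \<in> topspace X" using z by (simp add: ball_def)
    then have "d x w \<le> d x z + d z w" using d_tri assms w(1) by blast
    then show "w \<in> ball x r" using w by (simp add: ball_def)
  qed
  then show ?thesis unfolding open_char by (auto simp: ball_def)
qed

lemma in_ball: "x \<in> topspace X \<Longrightarrow> 0 < r \<Longrightarrow> x \<in> ball x r"
  by (simp add: ball_def d_self)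

lemma ball_mono: "r \<le> s \<Longrightarrow> ball x r \<subseteq> ball x s"
  by (auto simp: ball_def)

definition rho where
  "rho x U = (if \<exists>e>0. ball x e \<subseteq> U then SOME e. e > 0 \<and> ball x e \<subseteq> U else 1)"

lemma rho_pos: "0 < rho x U"
proof (cases "\<exists>e>0. ball x e \<subseteq> U")
  case True
  then have ex: "\<exists>e. e > 0 \<and> ball x e \<subseteq> U" by blast
  have "rho x U = (SOME e. e > 0 \<and> ball x e \<subseteq> U)" using True by (simp add: rho_def)
  then have "rho x U > 0 \<and> ball x (rho x U) \<subseteq> U" using someI_ex[OF ex] by simp
  then show ?thesis by blast
next
  case False
  have "rho x U = 1" unfolding rho_def using False by (rule if_not_P)
  then show ?thesis by simp
qed

lemma rho_ball: assumes "openin X U" "x \<in> U" shows "ball x (rho x U) \<subseteq> U"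
proof -
  obtain e where e: "e > 0" "\<forall>y\<in>topspace X. d x y < e \<longrightarrow> y \<in> U" using assms open_char by blast
  then have ex: "\<exists>e>0. ball x e \<subseteq> U" by (auto simp: ball_def)
  then have ex': "\<exists>e. e > 0 \<and> ball x e \<subseteq> U" by blast
  have "rho x U = (SOME e. e > 0 \<and> ball x e \<subseteq> U)" using ex by (simp add: rho_def)
  then have "rho x U > 0 \<and> ball x (rho x U) \<subseteq> U" using someI_ex[OF ex'] by simp
  then show ?thesis by blast
qed

definition Rp :: "'a ch_history \<Rightarrow> real" where
  "Rp h = foldl (\<lambda>r e. min (rho (fst (fst e)) (snd (fst e))) r / 2) 1 h"

lemma Rp_snoc: "Rp (h @ [e]) = min (rho (fst (fst e)) (snd (fst e))) (Rp h) / 2"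
  by (simp add: Rp_def)

lemma Rp_pos: "0 < Rp h"
proof (induction h rule: rev_induct)
  case Nil then show ?case by (simp add: Rp_def)
next
  case (snoc e h) then show ?case using rho_pos by (simp add: Rp_snoc)
qed

definition sigB :: "'a ch_strategy" where
  "sigB h m = ball (fst m) (min (rho (fst m) (snd m)) (Rp h) / 2)"

lemma sigB_legal:
  assumes "openin X U" "x \<in> U"
  shows "openin X (sigB h (x,U)) \<and> x \<in> sigB h (x,U) \<and> sigB h (x,U) \<subseteq> U"
proof -
  have xt: "x \<in> topspace X" using assms openin_subset by blast
  have pos: "0 < min (rho x U) (Rp h) / 2" using rho_pos Rp_pos by simp
  have "ball x (min (rho x U) (Rp h) / 2) \<subseteq> ball x (rho x U)"
    by (rule ball_mono) (use rho_pos[of x U] in \<open>simp add: min_def\<close>)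
  then show ?thesis using rho_ball[OF assms] ball_open[OF xt] in_ball[OF xt pos]
    unfolding sigB_def by auto
qed

context
  fixes x :: "nat \<Rightarrow> 'a" and U V :: "nat \<Rightarrow> 'a set"
  assumes play: "ch_play X sigB x U V"
begin

definition r where "r i = min (rho (x i) (U i)) (Rp (ch_hist x U V i)) / 2"

lemma pl0: "ch_empty_ok X x U V i" "V i = sigB (ch_hist x U V i) (x i, U i)"
  using play unfolding ch_play_def by blast+

lemma pl: "openin X (U i)" "x i \<in> U i" "U (Suc i) \<subseteq> V i" "V i = ball (x i) (r i)"
  using pl0(1)[of i] pl0(1)[of "Suc i"] pl0(2)[of i] unfolding ch_empty_ok_def sigB_def r_def by auto

lemma xt: "x i \<in> topspace X" using pl(1,2) openin_subset by blast

lemma r_pos: "0 < r i" unfolding r_def using rho_pos Rp_pos by simp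

lemma r_rho: "2 * r i \<le> rho (x i) (U i)" unfolding r_def by simp

lemma r_Suc: "2 * r (Suc i) \<le> r i"
proof -
  have "Rp (ch_hist x U V (Suc i)) = r i"
    unfolding ch_hist_Suc Rp_snoc r_def by simp
  then show ?thesis unfolding r_def[of "Suc i"] by simp
qed

lemma r_bound: "r i \<le> (1/2)^(Suc i)"
proof (induction i)
  case 0
  have "Rp (ch_hist x U V 0) = 1" by (simp add: Rp_def)
  then show ?case unfolding r_def by simp
next
  case (Suc i)
  then show ?case using r_Suc[of i] by simp
qed

lemma step_d: "d (x i) (x (Suc i)) < r i"
proof -
  have "x (Suc i) \<in> V i" using pl(2)[of "Suc i"] pl(3)[of i] by blast
  then show ?thesis using pl(4) by (simp add: ball_def)
qed

lemma chain: "i \<le> j \<Longrightarrow> d (x i) (x j) + 2 * r j \<le> 2 * r i"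
proof (induction j rule: dec_induct)
  case base then show ?case using d_self[OF xt] by simp
next
  case (step j)
  have "d (x i) (x (Suc j)) \<le> d (x i) (x j) + d (x j) (x (Suc j))" using d_tri xt by blast
  then show ?case using step_d[of j] r_Suc[of j] step.IH by linarith
qed

lemma small: assumes "0 < e" shows "\<exists>N. \<forall>n\<ge>N. (1/2::real)^n < e"
proof -
  obtain N where N: "(1/2::real)^N < e" using real_arch_pow_inv[OF assms, of "1/2"] by auto
  have "(1/2::real)^n < e" if "n \<ge> N" for n
  proof -
    have "(1/2::real)^n \<le> (1/2)^N" using that by (simp add: power_decreasing)
    then show ?thesis using N by linarith
  qed
  then show ?thesis by blast
qed

lemma limit: "\<exists>y. (\<forall>i. y \<in> V i) \<and> (\<forall>Z. openin X Z \<and> y \<in> Z \<longrightarrow> (\<exists>i. V i \<subseteq> Z))"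
proof -
  have cauchy: "\<forall>e>0. \<exists>N. \<forall>n\<ge>N. \<forall>p\<ge>n. d (x n) (x p) \<le> e"
  proof (intro allI impI)
    fix e :: real assume e: "0 < e"
    obtain N where N: "\<forall>n\<ge>N. (1/2::real)^n < e" using small[OF e] by blast
    have "d (x n) (x p) \<le> e" if "n \<ge> N" "p \<ge> n" for n p
    proof -
      have "d (x n) (x p) \<le> 2 * r n" using chain[OF that(2)] r_pos[of p] by linarith
      also have "\<dots> \<le> 2 * (1/2)^(Suc n)" using r_bound[of n] by simp
      also have "\<dots> = (1/2)^n" by simp
      finally show ?thesis using N that(1) by fastforce
    qed
    then show "\<exists>N. \<forall>n\<ge>N. \<forall>p\<ge>n. d (x n) (x p) \<le> e" by blast
  qed
  have "range x \<subseteq> topspace X" using xt by blast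
  then obtain y where y: "y \<in> topspace X" and lim: "(\<lambda>n. max (d (x n) y) (d y (x n))) \<longlonglongrightarrow> 0"
    using cpl cauchy unfolding qm_complete_def by blast
  have ev: "\<exists>N. \<forall>n\<ge>N. d (x n) y < e \<and> d y (x n) < e" if e0: "0 < e" for e
  proof -
    obtain N where "\<forall>n\<ge>N. norm (max (d (x n) y) (d y (x n)) - 0) < e" using LIMSEQ_D[OF lim e0] by blast
    then show ?thesis by (intro exI[of _ N]) auto
  qed
  have yU: "y \<in> U i" for i
  proof -
    define \<delta> where "\<delta> = r i - d (x i) (x (Suc i))"
    have \<delta>: "0 < \<delta>" using step_d[of i] unfolding \<delta>_def by simp
    obtain N where N: "\<forall>n\<ge>N. d (x n) y < \<delta> \<and> d y (x n) < \<delta>" using ev[OF \<delta>] by blast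
    define j where "j = max N (Suc i)"
    have "d (x (Suc i)) (x j) + 2 * r j \<le> 2 * r (Suc i)" using chain[of "Suc i" j] unfolding j_def by simp
    then have "d (x (Suc i)) (x j) \<le> r i" using r_pos[of j] r_Suc[of i] by linarith
    moreover have "d (x i) (x j) \<le> d (x i) (x (Suc i)) + d (x (Suc i)) (x j)" using d_tri xt by blast
    moreover have "d (x i) y \<le> d (x i) (x j) + d (x j) y" using d_tri xt y by blast
    moreover have "d (x j) y < \<delta>" using N unfolding j_def by simp
    ultimately have "d (x i) y < 2 * r i" unfolding \<delta>_def by linarith
    then have "d (x i) y < rho (x i) (U i)" using r_rho[of i] by linarith
    then have "y \<in> ball (x i) (rho (x i) (U i))" using y by (simp add: ball_def)
    then show ?thesis using rho_ball[OF pl(1) pl(2)] by blast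
  qed
  have yV: "y \<in> V i" for i using yU[of "Suc i"] pl(3)[of i] by blast
  have "\<exists>i. V i \<subseteq> Z" if zo: "openin X Z" "y \<in> Z" for Z
  proof -
    obtain e where e: "e > 0" "\<forall>w\<in>topspace X. d y w < e \<longrightarrow> w \<in> Z" using zo open_char by blast
    have e2: "0 < e / 2" using e by simp
    obtain N1 where N1: "\<forall>n\<ge>N1. d (x n) y < e/2 \<and> d y (x n) < e/2" using ev[OF e2] by blast
    obtain N2 where N2: "\<forall>n\<ge>N2. (1/2::real)^n < e/2" using small[OF e2] by blast
    define i where "i = max N1 N2"
    have ri: "r i < e / 2"
    proof -
      have "r i \<le> (1/2)^(Suc i)" by (rule r_bound)
      also have "\<dots> \<le> (1/2)^i" by simp
      moreover have "(1/2::real)^i < e/2" using N2 unfolding i_def by simp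
      ultimately show ?thesis by linarith
    qed
    have "V i \<subseteq> Z"
    proof
      fix z assume "z \<in> V i"
      then have z: "z \<in> topspace X" "d (x i) z < r i" using pl(4) by (auto simp: ball_def)
      have "d y z \<le> d y (x i) + d (x i) z" using d_tri y xt z(1) by blast
      moreover have "d y (x i) < e/2" using N1 unfolding i_def by simp
      ultimately have "d y z < e" using z(2) ri by linarith
      then show "z \<in> Z" using e(2) z(1) by blast
    qed
    then show ?thesis by blast
  qed
  then show ?thesis using yV by blast
qed

end

theorem ball_strategy: "ch_winning X sigB \<and> ch_convergent X sigB"
proof -
  have w1: "openin X (sigB (ch_hist x U V n) (x n, U n)) \<and>
        x n \<in> sigB (ch_hist x U V n) (x n, U n) \<and>
        sigB (ch_hist x U V n) (x n, U n) \<subseteq> U n" if "ch_partial_play X sigB x U V n" for x U V n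
  proof -
    have "ch_empty_ok X x U V n" using that unfolding ch_partial_play_def by blast
    then have "openin X (U n)" "x n \<in> U n" unfolding ch_empty_ok_def by blast+
    then show ?thesis by (rule sigB_legal)
  qed
  have w2: "(\<Inter>i. V i) \<noteq> {}" if pp: "ch_play X sigB x U V" for x U V
  proof -
    obtain y where "\<forall>i. y \<in> V i" using limit[OF pp] by blast
    then show ?thesis by blast
  qed
  have w3: "\<exists>y \<in> (\<Inter>i. V i). \<forall>Z. openin X Z \<and> y \<in> Z \<longrightarrow> (\<exists>i. V i \<subseteq> Z)"
    if pp: "ch_play X sigB x U V" for x U V
  proof -
    obtain y where "\<forall>i. y \<in> V i" "\<forall>Z. openin X Z \<and> y \<in> Z \<longrightarrow> (\<exists>i. V i \<subseteq> Z)"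
      using limit[OF pp] by blast
    then show ?thesis by blast
  qed
  have "ch_convergent X sigB" unfolding ch_convergent_def using w3 by blast
  moreover have "ch_winning X sigB" unfolding ch_winning_def using w1 w2 by blast
  ultimately show ?thesis by blast
qed

end

lemma three_one:
  assumes "quasi_Polish X"
  shows "\<exists>\<sigma>. ch_winning X \<sigma> \<and> ch_convergent X \<sigma>"
proof -
  obtain d where "quasi_metric_on (topspace X) d" "qm_induces X d" "qm_complete (topspace X) d"
    using assms unfolding quasi_Polish_def by blast
  then interpret qmsp X d by unfold_locales
  show ?thesis using ball_strategy by blast
qed

lemma basis_nat:
  assumes "second_countable X"
  obtains B :: "nat \<Rightarrow> 'a set" where "\<And>n. openin X (B n)"
    "\<And>U x. openin X U \<Longrightarrow> x \<in> U \<Longrightarrow> \<exists>n. x \<in> B n \<and> B n \<subseteq> U"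
proof -
  obtain \<B> where B: "countable \<B>" "\<forall>V\<in>\<B>. openin X V"
    "\<forall>U x. openin X U \<and> x \<in> U \<longrightarrow> (\<exists>V\<in>\<B>. x \<in> V \<and> V \<subseteq> U)"
  proof -
    have "\<exists>\<B>. countable \<B> \<and> (\<forall>V\<in>\<B>. openin X V) \<and>
             (\<forall>U x. openin X U \<and> x \<in> U \<longrightarrow> (\<exists>V \<in> \<B>. x \<in> V \<and> V \<subseteq> U))"
      using assms unfolding second_countable_def .
    then show ?thesis using that by blast
  qed
  define B where "B = from_nat_into (insert {} \<B>)"
  have rB: "range B = insert {} \<B>" unfolding B_def using B(1) by simp
  have "openin X (B n)" for n
  proof -
    have "B n \<in> insert {} \<B>" using rB by blast
    then show ?thesis using B(2) by auto
  qed
  moreover have "\<exists>n. x \<in> B n \<and> B n \<subseteq> U" if h: "openin X U" "x \<in> U" for U x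
  proof -
    have "\<exists>V\<in>\<B>. x \<in> V \<and> V \<subseteq> U" using B(3) h by blast
    then obtain V where V: "V \<in> \<B>" "x \<in> V" "V \<subseteq> U" by blast
    then have "V \<in> range B" using rB by blast
    then show ?thesis using V by blast
  qed
  ultimately show ?thesis using that by blast
qed

lemma one_two_three:
  assumes "ch_winning X \<sigma>" "ch_convergent X \<sigma>" "second_countable X" "t0_space X"
  shows "(\<exists>\<sigma>. ch_winning X \<sigma> \<and> ch_stationary \<sigma> \<and> ch_convergent X \<sigma>) \<and> quasi_Polish X"
proof -
  obtain B :: "nat \<Rightarrow> 'a set" where B: "\<And>n. openin X (B n)"
    "\<And>U x. openin X U \<Longrightarrow> x \<in> U \<Longrightarrow> \<exists>n. x \<in> B n \<and> B n \<subseteq> U"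
    using basis_nat[OF assms(3)] by blast
  interpret T: tree X \<sigma> B
    using assms(1,2) B by unfold_locales auto
  define W where "W m = T.Fam (from_nat m)" for m
  have WF: "W (to_nat j) = T.Fam j" for j unfolding W_def by simp
  interpret F: fam X W B
  proof
    show "openin X (W m i)" for m i unfolding W_def by (rule T.Fam_open)
    show "openin X (B n)" for n by (rule B(1))
    show "\<exists>n. x \<in> B n \<and> B n \<subseteq> U" if "openin X U" "x \<in> U" for U x using B(2) that by blast
    show "\<exists>m. W m = (\<lambda>i. B n)" for n using WF[of "Inl n"] T.Fam_B by metis
    fix s :: "nat \<Rightarrow> 'a"
    assume st: "\<forall>k. s k \<in> topspace X"
      and cs: "\<forall>m. \<exists>N. \<forall>k\<ge>N. \<forall>p\<ge>k. hh (W m) (s p) \<le> hh (W m) (s k)"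
    have cs': "\<forall>j. \<exists>N. \<forall>k\<ge>N. \<forall>q\<ge>k. hh (T.Fam j) (s q) \<le> hh (T.Fam j) (s k)"
    proof
      fix j
      show "\<exists>N. \<forall>k\<ge>N. \<forall>q\<ge>k. hh (T.Fam j) (s q) \<le> hh (T.Fam j) (s k)"
        using cs WF[of j] by metis
    qed
    obtain y where y: "y \<in> topspace X" "\<forall>j. \<exists>N. \<forall>k\<ge>N. hh (T.Fam j) (s k) = hh (T.Fam j) y"
      using T.TC[OF st cs'] by blast
    have "\<forall>m. \<exists>N. \<forall>k\<ge>N. hh (W m) (s k) = hh (W m) y"
    proof
      fix m
      show "\<exists>N. \<forall>k\<ge>N. hh (W m) (s k) = hh (W m) y" using y(2) unfolding W_def by blast
    qed
    then show "\<exists>y\<in>topspace X. \<forall>m. \<exists>N. \<forall>k\<ge>N. hh (W m) (s k) = hh (W m) y" using y(1) by blast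
  qed
  show ?thesis using F.stationary_strategy F.qP[OF assms(4,3)] by blast
qed

theorem corollary3p12:
  fixes X :: "'a topology"
  assumes "t0_space X" and "second_countable X"
  shows "((\<exists>\<sigma>. ch_winning X \<sigma> \<and> ch_convergent X \<sigma>) \<longleftrightarrow>
           (\<exists>\<sigma>. ch_winning X \<sigma> \<and> ch_stationary \<sigma> \<and> ch_convergent X \<sigma>)) \<and>
         ((\<exists>\<sigma>. ch_winning X \<sigma> \<and> ch_stationary \<sigma> \<and> ch_convergent X \<sigma>) \<longleftrightarrow>
           quasi_Polish X)"
proof -
  have A: "(\<exists>\<sigma>. ch_winning X \<sigma> \<and> ch_stationary \<sigma> \<and> ch_convergent X \<sigma>) \<and> quasi_Polish X"
    if "\<exists>\<sigma>. ch_winning X \<sigma> \<and> ch_convergent X \<sigma>"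
    using that one_two_three[OF _ _ assms(2,1)] by blast
  have C: "\<exists>\<sigma>. ch_winning X \<sigma> \<and> ch_convergent X \<sigma>" if "quasi_Polish X"
    using three_one[OF that] .
  show ?thesis using A C by blast
qed

end
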